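(* Let $F$ be a graph of diameter $2$, $n=|V(F)|$, $t=\delta(F)$, and let $l>n$ be an integer. Suppose that either $t=1$, or $t\ge2$ and $C_{l-2}^{n-2}>n!\,C_{l-1}^{n-t-1}$. Then $0<f_{2l}<z_{i+1}-z_i$ for every $i\in\{1,2,\dots,t\}$.
   Context: All graphs are simple, finite, undirected. The $F$-degree of a vertex $v$ in $G$ is the number of subgraphs of $G$ (not necessarily induced) isomorphic to $F$ and containing $v$. $A_{2l-1}$ is the graph with vertex set $\{1,\dots,2l-1\}$ in which distinct $i,j$ are adjacent iff $|i-j|\le l-1$; $F_{2l}$ is obtained from $A_{2l-1}$ by adding a new vertex $2l$ joined exactly to $1,\dots,t$. $z_i$ is the $F$-degree of $i$ in $A_{2l-1}$ and $f_{2l}$ the $F$-degree of vertex $2l$ in $F_{2l}$. $C_m^k=\frac{m!}{k!(m-k)!}$ for integers $m\ge k\ge 0$, and $C_m^k=0$ otherwise. *)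

theory Defs
  imports Main
begin

type_synonym 'a graph = "'a set \<times> 'a set set"

definition is_graph :: "'a graph \<Rightarrow> bool" where
  "is_graph G \<longleftrightarrow> finite (fst G) \<and>
     (\<forall>e\<in>snd G. \<exists>u v. u \<noteq> v \<and> e = {u, v} \<and> u \<in> fst G \<and> v \<in> fst G)"

definition degree :: "'a graph \<Rightarrow> 'a \<Rightarrow> nat" where
  "degree G v = card {u \<in> fst G. {u, v} \<in> snd G}"

definition min_degree :: "'a graph \<Rightarrow> nat" where
  "min_degree G = Min (degree G ` fst G)"

definition is_walk :: "'a graph \<Rightarrow> 'a list \<Rightarrow> bool" where
  "is_walk G xs \<longleftrightarrow> xs \<noteq> [] \<and> set xs \<subseteq> fst G \<and>
     (\<forall>i. Suc i < length xs \<longrightarrow> {xs ! i, xs ! Suc i} \<in> snd G)"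

definition connected_graph :: "'a graph \<Rightarrow> bool" where
  "connected_graph G \<longleftrightarrow> fst G \<noteq> {} \<and>
     (\<forall>u\<in>fst G. \<forall>v\<in>fst G. \<exists>xs. is_walk G xs \<and> hd xs = u \<and> last xs = v)"

definition gdist :: "'a graph \<Rightarrow> 'a \<Rightarrow> 'a \<Rightarrow> nat" where
  "gdist G u v = (LEAST k. \<exists>xs. is_walk G xs \<and> hd xs = u \<and> last xs = v \<and> length xs = Suc k)"

definition diameter :: "'a graph \<Rightarrow> nat" where
  "diameter G = Max {gdist G u v | u v. u \<in> fst G \<and> v \<in> fst G}"

definition subgraph :: "'a graph \<Rightarrow> 'a graph \<Rightarrow> bool" where
  "subgraph H G \<longleftrightarrow> is_graph H \<and> fst H \<subseteq> fst G \<and> snd H \<subseteq> snd G"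

definition isomorphic :: "'b graph \<Rightarrow> 'a graph \<Rightarrow> bool" where
  "isomorphic F H \<longleftrightarrow> (\<exists>f. bij_betw f (fst F) (fst H) \<and>
     (\<forall>u\<in>fst F. \<forall>v\<in>fst F. {u, v} \<in> snd F \<longleftrightarrow> {f u, f v} \<in> snd H))"

definition F_degree :: "'b graph \<Rightarrow> 'a graph \<Rightarrow> 'a \<Rightarrow> nat" where
  "F_degree F G v = card {H. subgraph H G \<and> isomorphic F H \<and> v \<in> fst H}"

definition A_graph :: "nat \<Rightarrow> nat graph" where
  "A_graph l = ({1..2*l-1},
     {{i, j} | i j. i \<in> {1..2*l-1} \<and> j \<in> {1..2*l-1} \<and> i < j \<and> j - i \<le> l - 1})"

definition F_graph :: "nat \<Rightarrow> nat \<Rightarrow> nat graph" where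
  "F_graph l t = (insert (2*l) (fst (A_graph l)),
     snd (A_graph l) \<union> {{j, 2*l} | j. j \<in> {1..t}})"

end

theory Submission
  imports Defs "HOL-Combinatorics.Permutations"
begin

definition gmap :: "('b \<Rightarrow> 'a) \<Rightarrow> 'b graph \<Rightarrow> 'a graph" where
  "gmap g H = (g ` fst H, (\<lambda>e. g ` e) ` snd H)"

lemma is_graphD: "is_graph G \<Longrightarrow> e \<in> snd G \<Longrightarrow> \<exists>u v. u \<noteq> v \<and> e = {u, v} \<and> u \<in> fst G \<and> v \<in> fst G"
  unfolding is_graph_def by blast

lemma no_loop: "is_graph G \<Longrightarrow> {u} \<notin> snd G"
proof
  assume "is_graph G" "{u} \<in> snd G"
  then obtain a b where "a \<noteq> b" "{u} = {a,b}" using is_graphD by blast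
  then show False by (simp add: doubleton_eq_iff)
qed

lemma edge_in: assumes "is_graph G" "{u, v} \<in> snd G" shows "u \<in> fst G \<and> v \<in> fst G \<and> u \<noteq> v"
proof -
  obtain a b where "a \<noteq> b" "{u,v} = {a,b}" "a \<in> fst G" "b \<in> fst G" using is_graphD[OF assms] by blast
  then show ?thesis by (auto simp: doubleton_eq_iff)
qed

lemma gmap_comp: "gmap f (gmap g H) = gmap (f \<circ> g) H"
  unfolding gmap_def by (auto simp: image_comp)

lemma gmap_cong: assumes "is_graph H" "\<And>x. x \<in> fst H \<Longrightarrow> f x = g x"
  shows "gmap f H = gmap g H"
proof -
  have "f ` fst H = g ` fst H" using assms(2) by (auto simp: image_def)
  moreover have "(\<lambda>e. f ` e) ` snd H = (\<lambda>e. g ` e) ` snd H"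
  proof (rule image_cong[OF refl])
    fix e assume "e \<in> snd H"
    then obtain u v where "e = {u,v}" "u \<in> fst H" "v \<in> fst H" using is_graphD[OF assms(1)] by blast
    then show "f ` e = g ` e" using assms(2) by auto
  qed
  ultimately show ?thesis unfolding gmap_def by simp
qed

lemma gmap_id: "gmap id H = H"
  unfolding gmap_def by simp

lemma is_graph_gmap: assumes "is_graph H" "inj_on g (fst H)"
  shows "is_graph (gmap g H)"
  unfolding is_graph_def gmap_def
proof (intro conjI ballI)
  show "finite (fst (g ` fst H, (`) g ` snd H))" using assms(1) unfolding is_graph_def by simp
next
  fix e assume "e \<in> snd (g ` fst H, (`) g ` snd H)"
  then obtain e0 where "e0 \<in> snd H" "e = g ` e0" by auto
  then obtain u v where "u \<noteq> v" "e0 = {u,v}" "u \<in> fst H" "v \<in> fst H" using is_graphD[OF assms(1)] by blast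
  then show "\<exists>u v. u \<noteq> v \<and> e = {u, v} \<and> u \<in> fst (g ` fst H, (`) g ` snd H) \<and> v \<in> fst (g ` fst H, (`) g ` snd H)"
    using assms(2) \<open>e = g ` e0\<close> by (auto dest: inj_onD)
qed

lemma iso_gmap_self: assumes "is_graph F" "inj_on g (fst F)"
  shows "isomorphic F (gmap g F)"
  unfolding isomorphic_def
proof (intro exI conjI ballI)
  show "bij_betw g (fst F) (fst (gmap g F))" using assms(2) by (simp add: gmap_def bij_betw_def)
next
  fix u v assume uv: "u \<in> fst F" "v \<in> fst F"
  show "({u, v} \<in> snd F) = ({g u, g v} \<in> snd (gmap g F))"
  proof
    assume "{u, v} \<in> snd F"
    moreover have "g ` {u,v} = {g u, g v}" by simp
    ultimately show "{g u, g v} \<in> snd (gmap g F)"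
      unfolding gmap_def by (metis image_eqI snd_conv)
  next
    assume "{g u, g v} \<in> snd (gmap g F)"
    then obtain e where e: "e \<in> snd F" "{g u, g v} = g ` e" unfolding gmap_def by auto
    then obtain a b where ab: "e = {a,b}" "a \<in> fst F" "b \<in> fst F" using is_graphD[OF assms(1)] by blast
    have "{g u, g v} = {g a, g b}" using e ab by simp
    then have "(g u = g a \<and> g v = g b) \<or> (g u = g b \<and> g v = g a)" by (simp add: doubleton_eq_iff)
    then have "(u = a \<and> v = b) \<or> (u = b \<and> v = a)" using assms(2) uv ab by (auto dest: inj_onD)
    then show "{u, v} \<in> snd F" using e ab by (auto simp: insert_commute)
  qed
qed

lemma iso_is_gmap: assumes "is_graph F" "is_graph H" "bij_betw f (fst F) (fst H)"
   "\<forall>u\<in>fst F. \<forall>v\<in>fst F. {u, v} \<in> snd F \<longleftrightarrow> {f u, f v} \<in> snd H"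
  shows "H = gmap f F"
proof -
  have 1: "fst H = f ` fst F" using assms(3) by (simp add: bij_betw_def)
  have "snd H = (\<lambda>e. f ` e) ` snd F"
  proof
    show "snd H \<subseteq> (`) f ` snd F"
    proof
      fix e assume "e \<in> snd H"
      then obtain x y where xy: "e = {x,y}" "x \<in> fst H" "y \<in> fst H" using is_graphD[OF assms(2)] by blast
      then obtain u v where "u \<in> fst F" "v \<in> fst F" "x = f u" "y = f v" using 1 by auto
      moreover have "{u,v} \<in> snd F" using assms(4) xy \<open>e \<in> snd H\<close> calculation by auto
      moreover have "e = f ` {u,v}" using xy calculation by auto
      ultimately show "e \<in> (`) f ` snd F" by blast
    qed
  next
    show "(`) f ` snd F \<subseteq> snd H"
    proof
      fix e assume "e \<in> (`) f ` snd F"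
      then obtain e0 where "e0 \<in> snd F" "e = f ` e0" by auto
      then obtain u v where "e0 = {u,v}" "u \<in> fst F" "v \<in> fst F" using is_graphD[OF assms(1)] by blast
      then show "e \<in> snd H" using assms(4) \<open>e0 \<in> snd F\<close> \<open>e = f ` e0\<close> by auto
    qed
  qed
  then show ?thesis using 1 by (simp add: gmap_def prod_eq_iff)
qed

lemma iso_obtain: assumes "isomorphic F H" "is_graph F" "is_graph H"
  obtains f where "bij_betw f (fst F) (fst H)" "H = gmap f F"
    "\<forall>u\<in>fst F. \<forall>v\<in>fst F. {u, v} \<in> snd F \<longleftrightarrow> {f u, f v} \<in> snd H"
  using assms iso_is_gmap unfolding isomorphic_def by metis

lemma iso_gmap: assumes "isomorphic F H" "is_graph F" "is_graph H" "inj_on g (fst H)"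
  shows "isomorphic F (gmap g H)"
proof -
  obtain f where f: "bij_betw f (fst F) (fst H)" "H = gmap f F" using iso_obtain assms by metis
  have "inj_on (g \<circ> f) (fst F)" using f(1) assms(4) by (simp add: bij_betw_def comp_inj_on)
  then show ?thesis using iso_gmap_self[OF assms(2)] f(2) gmap_comp by metis
qed



lemma walk1: "u \<in> fst G \<Longrightarrow> is_walk G [u]"
  unfolding is_walk_def by simp

lemma walk2: "u \<in> fst G \<Longrightarrow> v \<in> fst G \<Longrightarrow> {u,v} \<in> snd G \<Longrightarrow> is_walk G [u,v]"
  unfolding is_walk_def by (auto simp: less_Suc_eq)

lemma gdist_le: "is_walk G xs \<Longrightarrow> hd xs = u \<Longrightarrow> last xs = v \<Longrightarrow> length xs = Suc k \<Longrightarrow> gdist G u v \<le> k"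
  unfolding gdist_def by (rule Least_le) blast

lemma gdist_walk: assumes "connected_graph G" "u \<in> fst G" "v \<in> fst G"
  shows "\<exists>xs. is_walk G xs \<and> hd xs = u \<and> last xs = v \<and> length xs = Suc (gdist G u v)"
proof -
  obtain xs where xs: "is_walk G xs" "hd xs = u" "last xs = v" using assms unfolding connected_graph_def by blast
  then have "length xs = Suc (length xs - 1)" unfolding is_walk_def by (cases xs) auto
  then have "\<exists>k xs. is_walk G xs \<and> hd xs = u \<and> last xs = v \<and> length xs = Suc k" using xs by blast
  then show ?thesis unfolding gdist_def by (rule LeastI_ex)
qed

lemma gdist_le_diam: assumes "is_graph G" "u \<in> fst G" "v \<in> fst G"
  shows "gdist G u v \<le> diameter G"
proof -
  have "{gdist G u v |u v. u \<in> fst G \<and> v \<in> fst G} = (\<lambda>(u,v). gdist G u v) ` (fst G \<times> fst G)" by auto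
  then have "finite {gdist G u v |u v. u \<in> fst G \<and> v \<in> fst G}" using assms(1) unfolding is_graph_def by simp
  then show ?thesis unfolding diameter_def using assms by (intro Max_ge) auto
qed

lemma len1: "length xs = Suc 0 \<Longrightarrow> \<exists>a. xs = [a]"
  by (cases xs) auto

lemma len2: "length xs = Suc (Suc 0) \<Longrightarrow> \<exists>a b. xs = [a,b]"
  by (cases xs) (auto dest: len1)

lemma len3: "length xs = Suc (Suc (Suc 0)) \<Longrightarrow> \<exists>a b c. xs = [a,b,c]"
  by (cases xs) (auto dest: len2)

lemma diam_prop: assumes "is_graph G" "connected_graph G" "diameter G = 2" "u \<in> fst G" "v \<in> fst G"
  shows "u = v \<or> {u,v} \<in> snd G \<or> (\<exists>w\<in>fst G. {u,w} \<in> snd G \<and> {w,v} \<in> snd G)"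
proof -
  obtain xs where xs: "is_walk G xs" "hd xs = u" "last xs = v" "length xs = Suc (gdist G u v)"
    using gdist_walk[OF assms(2,4,5)] by blast
  have k: "gdist G u v \<le> 2" using gdist_le_diam[OF assms(1,4,5)] assms(3) by simp
  have sub: "set xs \<subseteq> fst G" and ed: "\<And>i. Suc i < length xs \<Longrightarrow> {xs ! i, xs ! Suc i} \<in> snd G"
    using xs(1) unfolding is_walk_def by auto
  consider "gdist G u v = 0" | "gdist G u v = 1" | "gdist G u v = 2" using k by linarith
  then show ?thesis
  proof cases
    case 1
    then obtain a where a: "xs = [a]" using xs(4) len1 by force
    then have "u = v" using xs(2,3) by simp
    then show ?thesis by simp
  next
    case 2
    then have "length xs = Suc (Suc 0)" using xs(4) by simp
    then obtain a b where ab: "xs = [a,b]" using len2 by blast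
    have "{xs ! 0, xs ! Suc 0} \<in> snd G" using ed[of 0] ab by simp
    then have "{u, v} \<in> snd G" using ab xs(2,3) by simp
    then show ?thesis by simp
  next
    case 3
    then have "length xs = Suc (Suc (Suc 0))" using xs(4) by simp
    then obtain a b c where abc: "xs = [a,b,c]" using len3 by blast
    have "{xs ! 0, xs ! Suc 0} \<in> snd G" "{xs ! 1, xs ! Suc 1} \<in> snd G" using ed[of 0] ed[of 1] abc by simp_all
    then have "{u, b} \<in> snd G" "{b, v} \<in> snd G" using abc xs(2,3) by simp_all
    moreover have "b \<in> fst G" using sub abc by simp
    ultimately show ?thesis by blast
  qed
qed

lemma diam_pair: assumes "is_graph G" "connected_graph G" "diameter G = 2"
  shows "\<exists>u w v. u \<in> fst G \<and> v \<in> fst G \<and> w \<in> fst G \<and> u \<noteq> v \<and> {u,v} \<notin> snd G \<and> {u,w} \<in> snd G \<and> {w,v} \<in> snd G"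
proof -
  have eq: "{gdist G u v |u v. u \<in> fst G \<and> v \<in> fst G} = (\<lambda>(u,v). gdist G u v) ` (fst G \<times> fst G)" by auto
  then have "finite {gdist G u v |u v. u \<in> fst G \<and> v \<in> fst G}" using assms(1) unfolding is_graph_def by simp
  moreover have "fst G \<noteq> {}" using assms(2) unfolding connected_graph_def by simp
  then have "{gdist G u v |u v. u \<in> fst G \<and> v \<in> fst G} \<noteq> {}" by auto
  ultimately have "diameter G \<in> {gdist G u v |u v. u \<in> fst G \<and> v \<in> fst G}" unfolding diameter_def by (rule Max_in)
  then obtain u v where uv: "u \<in> fst G" "v \<in> fst G" "gdist G u v = 2" using assms(3) by auto
  have "u \<noteq> v"
  proof
    assume "u = v"
    then have "gdist G u v \<le> 0" using gdist_le[OF walk1[OF uv(1)]] by simp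
    then show False using uv by simp
  qed
  moreover have "{u,v} \<notin> snd G"
  proof
    assume "{u,v} \<in> snd G"
    then have "gdist G u v \<le> 1" using gdist_le[OF walk2[OF uv(1,2)]] by simp
    then show False using uv by simp
  qed
  ultimately show ?thesis using diam_prop[OF assms uv(1,2)] uv by blast
qed

lemma min_degree_le: assumes "is_graph G" "v \<in> fst G" shows "min_degree G \<le> degree G v"
  unfolding min_degree_def using assms unfolding is_graph_def by (intro Min_le) auto

lemma min_degree_ex: assumes "is_graph G" "fst G \<noteq> {}" shows "\<exists>v\<in>fst G. degree G v = min_degree G"
proof -
  have "min_degree G \<in> degree G ` fst G" unfolding min_degree_def using assms unfolding is_graph_def
    by (intro Min_in) auto
  then show ?thesis by auto
qed

lemma copy_props: assumes "is_graph F" "connected_graph F" "diameter F = 2" "is_graph H" "isomorphic F H"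
  shows "card (fst H) = card (fst F)"
    "\<And>x. x \<in> fst H \<Longrightarrow> min_degree F \<le> card {y\<in>fst H. {y,x} \<in> snd H}"
    "\<And>x y. x \<in> fst H \<Longrightarrow> y \<in> fst H \<Longrightarrow> x = y \<or> {x,y} \<in> snd H \<or> (\<exists>w\<in>fst H. {x,w} \<in> snd H \<and> {w,y} \<in> snd H)"
proof -
  obtain f where f: "bij_betw f (fst F) (fst H)"
    "\<forall>u\<in>fst F. \<forall>v\<in>fst F. {u, v} \<in> snd F \<longleftrightarrow> {f u, f v} \<in> snd H"
    using assms(5) unfolding isomorphic_def by blast
  show "card (fst H) = card (fst F)" using f(1) by (simp add: bij_betw_same_card)
  have im: "fst H = f ` fst F" and inj: "inj_on f (fst F)" using f(1) by (auto simp: bij_betw_def)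
  show "min_degree F \<le> card {y\<in>fst H. {y,x} \<in> snd H}" if xH: "x \<in> fst H" for x
  proof -
    obtain u where u: "u \<in> fst F" "x = f u" using xH im by auto
    have "{y\<in>fst H. {y,x} \<in> snd H} = f ` {w\<in>fst F. {w,u} \<in> snd F}"
    proof
      show "{y \<in> fst H. {y, x} \<in> snd H} \<subseteq> f ` {w \<in> fst F. {w, u} \<in> snd F}"
      proof
        fix y assume y: "y \<in> {y \<in> fst H. {y, x} \<in> snd H}"
        then obtain w where w: "w \<in> fst F" "y = f w" using im by auto
        then have "{w,u} \<in> snd F" using f(2) u y by simp
        then show "y \<in> f ` {w \<in> fst F. {w, u} \<in> snd F}" using w by blast
      qed
    next
      show "f ` {w \<in> fst F. {w, u} \<in> snd F} \<subseteq> {y \<in> fst H. {y, x} \<in> snd H}"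
      proof
        fix y assume "y \<in> f ` {w \<in> fst F. {w, u} \<in> snd F}"
        then obtain w where w: "w \<in> fst F" "y = f w" "{w, u} \<in> snd F" by blast
        then have "{f w, f u} \<in> snd H" using f(2) u by simp
        then show "y \<in> {y \<in> fst H. {y, x} \<in> snd H}" using w u im by blast
      qed
    qed
    moreover have "inj_on f {w\<in>fst F. {w,u} \<in> snd F}" using inj by (rule inj_on_subset) auto
    ultimately have "card {y\<in>fst H. {y,x} \<in> snd H} = degree F u" unfolding degree_def by (simp add: card_image)
    then show ?thesis using min_degree_le[OF assms(1) u(1)] by simp
  qed
  show "x = y \<or> {x,y} \<in> snd H \<or> (\<exists>w\<in>fst H. {x,w} \<in> snd H \<and> {w,y} \<in> snd H)"
    if xyH: "x \<in> fst H" "y \<in> fst H" for x y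
  proof -
    obtain u v where uv: "u \<in> fst F" "x = f u" "v \<in> fst F" "y = f v" using xyH im by auto
    from diam_prop[OF assms(1-3) uv(1,3)] show ?thesis
    proof (elim disjE)
      assume "u = v" then show ?thesis using uv by simp
    next
      assume "{u,v} \<in> snd F" then have "{f u, f v} \<in> snd H" using uv f(2) by simp
      then show ?thesis using uv by simp
    next
      assume "\<exists>w\<in>fst F. {u, w} \<in> snd F \<and> {w, v} \<in> snd F"
      then obtain w where "w \<in> fst F" "{u, w} \<in> snd F" "{w, v} \<in> snd F" by blast
      moreover have "{f u, f w} \<in> snd H" "{f w, f v} \<in> snd H" using f(2) uv calculation by auto
      moreover have "f w \<in> fst H" using im calculation by blast
      ultimately show ?thesis using uv by blast
    qed
  qed
qed



lemma vertsA: "fst (A_graph l) = {1..2*l-1}"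
  unfolding A_graph_def by simp

lemma vertsF: "fst (F_graph l t) = insert (2*l) {1..2*l-1}"
  unfolding F_graph_def A_graph_def by simp

lemma adjA: "{x,y} \<in> snd (A_graph l) \<longleftrightarrow>
   x \<noteq> y \<and> 1 \<le> x \<and> 1 \<le> y \<and> x \<le> 2*l-1 \<and> y \<le> 2*l-1 \<and> x \<le> y + (l-1) \<and> y \<le> x + (l-1)"
proof
  assume "{x,y} \<in> snd (A_graph l)"
  then obtain i j where ij: "{x,y} = {i,j}" "i \<in> {1..2*l-1}" "j \<in> {1..2*l-1}" "i < j" "j - i \<le> l - 1"
    unfolding A_graph_def by auto
  then have "(x = i \<and> y = j) \<or> (x = j \<and> y = i)" by (simp add: doubleton_eq_iff)
  then show "x \<noteq> y \<and> 1 \<le> x \<and> 1 \<le> y \<and> x \<le> 2*l-1 \<and> y \<le> 2*l-1 \<and> x \<le> y + (l-1) \<and> y \<le> x + (l-1)"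
    using ij by auto
next
  assume h: "x \<noteq> y \<and> 1 \<le> x \<and> 1 \<le> y \<and> x \<le> 2*l-1 \<and> y \<le> 2*l-1 \<and> x \<le> y + (l-1) \<and> y \<le> x + (l-1)"
  show "{x,y} \<in> snd (A_graph l)"
  proof (cases "x < y")
    case True
    then have "\<exists>i j. {x,y} = {i,j} \<and> i \<in> {1..2*l-1} \<and> j \<in> {1..2*l-1} \<and> i < j \<and> j - i \<le> l - 1"
      using h by (intro exI[of _ x] exI[of _ y]) auto
    then show ?thesis unfolding A_graph_def by simp
  next
    case False
    then have "\<exists>i j. {x,y} = {i,j} \<and> i \<in> {1..2*l-1} \<and> j \<in> {1..2*l-1} \<and> i < j \<and> j - i \<le> l - 1"
      using h by (intro exI[of _ y] exI[of _ x]) auto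
    then show ?thesis unfolding A_graph_def by simp
  qed
qed

lemma adjA_I: "x \<noteq> y \<Longrightarrow> 1 \<le> x \<Longrightarrow> 1 \<le> y \<Longrightarrow> x \<le> 2*l-1 \<Longrightarrow> y \<le> 2*l-1 \<Longrightarrow> x \<le> y + (l-1) \<Longrightarrow> y \<le> x + (l-1) \<Longrightarrow> {x,y} \<in> snd (A_graph l)"
  using adjA by blast

lemma adjA_D: assumes "{x,y} \<in> snd (A_graph l)"
  shows "x \<noteq> y" "1 \<le> x" "1 \<le> y" "x \<le> 2*l-1" "y \<le> 2*l-1" "x \<le> y + (l-1)" "y \<le> x + (l-1)"
  using assms unfolding adjA by blast+

lemma edgeA_form: "e \<in> snd (A_graph l) \<Longrightarrow> \<exists>x y. e = {x,y} \<and> {x,y} \<in> snd (A_graph l)"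
  unfolding A_graph_def by auto

lemma adjF: "{x,y} \<in> snd (F_graph l t) \<longleftrightarrow>
   {x,y} \<in> snd (A_graph l) \<or> (x = 2*l \<and> y \<in> {1..t}) \<or> (y = 2*l \<and> x \<in> {1..t})"
  unfolding F_graph_def by (auto simp: doubleton_eq_iff)

lemma is_graph_A: "is_graph (A_graph l)"
  unfolding is_graph_def
proof (intro conjI ballI)
  show "finite (fst (A_graph l))" by (simp add: vertsA)
  fix e assume "e \<in> snd (A_graph l)"
  then obtain x y where "e = {x,y}" "{x,y} \<in> snd (A_graph l)" using edgeA_form by blast
  then show "\<exists>u v. u \<noteq> v \<and> e = {u, v} \<and> u \<in> fst (A_graph l) \<and> v \<in> fst (A_graph l)"
    by (auto simp: adjA vertsA)
qed

lemma finite_EA: "finite (snd (A_graph l))"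
proof -
  have "snd (A_graph l) \<subseteq> Pow {1..2*l-1}" unfolding A_graph_def by auto
  then show ?thesis by (rule finite_subset) simp
qed

lemma finite_EF: "finite (snd (F_graph l t))"
proof -
  have "snd (F_graph l t) = snd (A_graph l) \<union> (\<lambda>j. {j, 2*l}) ` {1..t}" unfolding F_graph_def by auto
  then show ?thesis using finite_EA by simp
qed

lemma finite_subgraphs: assumes "finite (fst G)" "finite (snd G)"
  shows "finite {H. subgraph H G \<and> P H}"
proof -
  have "{H. subgraph H G \<and> P H} \<subseteq> Pow (fst G) \<times> Pow (snd G)" unfolding subgraph_def by auto
  then show ?thesis by (rule finite_subset) (simp add: assms)
qed

lemma finite_subA: "finite {H. subgraph H (A_graph l) \<and> P H}"
  by (rule finite_subgraphs) (simp_all add: vertsA finite_EA)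

lemma finite_subF: "finite {H. subgraph H (F_graph l t) \<and> P H}"
  by (rule finite_subgraphs) (simp_all add: vertsF finite_EF)

lemma clique_sub: assumes "is_graph F" "inj_on g (fst F)" "g ` fst F \<subseteq> {c..c+(l-1)}" "1 \<le> c" "c+(l-1) \<le> 2*l-1"
  shows "subgraph (gmap g F) (A_graph l)"
  unfolding subgraph_def
proof (intro conjI)
  show "is_graph (gmap g F)" using is_graph_gmap assms by blast
  show "fst (gmap g F) \<subseteq> fst (A_graph l)"
  proof
    fix y assume "y \<in> fst (gmap g F)"
    then have "y \<in> {c..c+(l-1)}" using assms(3) by (auto simp: gmap_def)
    then show "y \<in> fst (A_graph l)" unfolding vertsA using assms(4,5) by (simp only: atLeastAtMost_iff) linarith
  qed
  show "snd (gmap g F) \<subseteq> snd (A_graph l)"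
  proof
    fix e assume "e \<in> snd (gmap g F)"
    then obtain e0 where "e0 \<in> snd F" "e = g ` e0" by (auto simp: gmap_def)
    then obtain u v where uv: "u \<noteq> v" "e0 = {u,v}" "u \<in> fst F" "v \<in> fst F" using is_graphD[OF assms(1)] by blast
    then have "g u \<noteq> g v" using assms(2) by (auto dest: inj_onD)
    moreover have "g u \<in> {c..c+(l-1)}" "g v \<in> {c..c+(l-1)}" using uv assms(3) by auto
    ultimately have "{g u, g v} \<in> snd (A_graph l)" using assms(4,5) unfolding adjA by auto
    then show "e \<in> snd (A_graph l)" using uv \<open>e = g ` e0\<close> by simp
  qed
qed



lemma Ei_lower:
  assumes F: "is_graph F" and ab: "{a,b} \<in> snd F" and n: "card (fst F) = n" "2 \<le> n"
    and i: "1 \<le> i" "i + l \<le> 2*l-1"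
  shows "(l-2) choose (n-2) \<le> card {H. subgraph H (A_graph l) \<and> isomorphic F H \<and> i+1 \<in> fst H \<and> i \<notin> fst H \<and> {i+1, i+l} \<in> snd H}"
    (is "_ \<le> card ?E")
proof -
  define Ts where "Ts = {T. T \<subseteq> {i+2..i+l-1} \<and> card T = n-2}"
  have l2: "2 \<le> l" using i by linarith
  have cI: "card {i+2..i+l-1} = l-2" using l2 by simp
  have cTs: "card Ts = (l-2) choose (n-2)" unfolding Ts_def using n_subsets[of "{i+2..i+l-1}" "n-2"] cI by simp
  have abV: "a \<in> fst F" "b \<in> fst F" "a \<noteq> b" using edge_in[OF F ab] by auto
  have finV: "finite (fst F)" using F unfolding is_graph_def by simp
  have build: "insert (i+1) (insert (i+l) T) \<in> fst ` ?E" if T: "T \<in> Ts" for T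
  proof -
    have Tsub: "T \<subseteq> {i+2..i+l-1}" and cT: "card T = n-2" using T unfolding Ts_def by auto
    have finT: "finite T" using Tsub finite_subset by blast
    have "card (fst F - {a,b}) = n-2" using abV n finV by (simp add: card_Diff_subset)
    then obtain h where h: "bij_betw h (fst F - {a,b}) T" using finite_same_card_bij[OF _ finT] finV cT by auto
    define g where "g x = (if x = a then i+1 else if x = b then i+l else h x)" for x
    define W where "W = insert (i+1) (insert (i+l) T)"
    have V: "fst F = insert a (insert b (fst F - {a,b}))" using abV by auto
    have "g ` (fst F - {a,b}) = h ` (fst F - {a,b})" unfolding g_def by (rule image_cong) auto
    also have "\<dots> = T" using h by (simp add: bij_betw_def)
    finally have gi: "g ` fst F = W" unfolding W_def using abV V
      by (metis g_def image_insert)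
    have "i+l \<notin> {i+2..i+l-1}" "i+1 \<notin> {i+2..i+l-1}" using l2 by auto
    then have notin: "i+1 \<notin> T" "i+l \<notin> T" using Tsub by blast+
    have "card W = n" unfolding W_def using notin finT cT n l2 by simp
    then have inj: "inj_on g (fst F)" using gi n finV by (intro eq_card_imp_inj_on) auto
    have "{i+2..i+l-1} \<subseteq> {i+1..i+1+(l-1)}" using l2 by auto
    moreover have "i+1 \<in> {i+1..i+1+(l-1)}" "i+l \<in> {i+1..i+1+(l-1)}" using l2 by auto
    ultimately have Wsub: "W \<subseteq> {i+1..i+1+(l-1)}" unfolding W_def using Tsub by blast
    define H where "H = gmap g F"
    have sub: "subgraph H (A_graph l)" unfolding H_def
      using clique_sub[OF F inj, of "i+1" l] gi Wsub i by simp
    have iso: "isomorphic F H" unfolding H_def by (rule iso_gmap_self[OF F inj])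
    have fH: "fst H = W" unfolding H_def gmap_def using gi by simp
    have "g ` {a,b} \<in> snd H" unfolding H_def gmap_def using ab by (metis image_eqI snd_conv)
    moreover have "g ` {a,b} = {i+1, i+l}" unfolding g_def using abV by (simp add: insert_commute)
    ultimately have "{i+1, i+l} \<in> snd H" by simp
    moreover have ii: "i \<notin> {i+2..i+l-1}" by simp
    moreover have "i+1 \<in> fst H" "i \<notin> fst H" using fH Tsub l2 ii unfolding W_def by auto
    ultimately have "H \<in> ?E" using sub iso by simp
    then show ?thesis using fH unfolding W_def by force
  qed
  have finE: "finite ?E" using finite_subA[of l] by (rule finite_subset[rotated]) auto
  have "inj_on (\<lambda>T. insert (i+1) (insert (i+l) T)) Ts"
  proof (rule inj_onI)
    fix S T assume ST: "S \<in> Ts" "T \<in> Ts" and eq: "insert (i+1) (insert (i+l) S) = insert (i+1) (insert (i+l) T)"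
    have ex: "i+l \<notin> {i+2..i+l-1}" "i+1 \<notin> {i+2..i+l-1}" using l2 by auto
    have ni: "i+1 \<notin> S" "i+l \<notin> S" "i+1 \<notin> T" "i+l \<notin> T" using ST ex unfolding Ts_def by blast+
    show "S = T"
    proof (rule set_eqI)
      fix x show "x \<in> S \<longleftrightarrow> x \<in> T"
      proof
        assume "x \<in> S" then have "x \<in> insert (i+1) (insert (i+l) T)" "x \<noteq> i+1" "x \<noteq> i+l" using eq ni by auto
        then show "x \<in> T" by simp
      next
        assume "x \<in> T" then have "x \<in> insert (i+1) (insert (i+l) S)" "x \<noteq> i+1" "x \<noteq> i+l" using eq ni by auto
        then show "x \<in> S" by simp
      qed
    qed
  qed
  then have "card Ts \<le> card (fst ` ?E)"
    using build finE by (intro card_inj_on_le) auto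
  also have "\<dots> \<le> card ?E" using finE by (rule card_image_le)
  finally show ?thesis using cTs by simp
qed



lemma diff_lower:
  assumes F: "is_graph F" and i: "1 \<le> i" "i + 1 \<le> l"
  shows "int (card {H. subgraph H (A_graph l) \<and> isomorphic F H \<and> i+1 \<in> fst H \<and> i \<notin> fst H \<and> {i+1, i+l} \<in> snd H})
    \<le> int (F_degree F (A_graph l) (i+1)) - int (F_degree F (A_graph l) i)"
proof -
  define A where "A v = {H. subgraph H (A_graph l) \<and> isomorphic F H \<and> v \<in> fst H}" for v
  define E where "E = {H. subgraph H (A_graph l) \<and> isomorphic F H \<and> i+1 \<in> fst H \<and> i \<notin> fst H \<and> {i+1, i+l} \<in> snd H}"
  define \<rho> where "\<rho> x = (if x = i then i+1 else x)" for x :: nat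
  define \<rho>' where "\<rho>' x = (if x = i+1 then i else x)" for x :: nat
  have finA: "finite (A v)" for v unfolding A_def using finite_subA by simp
  have finE: "finite E" unfolding E_def using finite_subA by simp
  have EA: "E \<subseteq> A (i+1) - A i" unfolding E_def A_def by auto
  have phi: "gmap \<rho> H \<in> A (i+1) - A i - E" if H: "H \<in> A i - A (i+1)" for H
  proof -
    have sub: "subgraph H (A_graph l)" and iso: "isomorphic F H" and iH: "i \<in> fst H" and i1H: "i+1 \<notin> fst H"
      using H unfolding A_def by auto
    have gH: "is_graph H" using sub unfolding subgraph_def by simp
    have inj: "inj_on \<rho> (fst H)" using i1H unfolding \<rho>_def by (auto intro: inj_onI split: if_splits)
    have VH: "fst H \<subseteq> {1..2*l-1}" using sub unfolding subgraph_def vertsA by simp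
    have EH: "snd H \<subseteq> snd (A_graph l)" using sub unfolding subgraph_def by simp
    have sub2: "subgraph (gmap \<rho> H) (A_graph l)"
      unfolding subgraph_def
    proof (intro conjI)
      show "is_graph (gmap \<rho> H)" using is_graph_gmap[OF gH inj] .
      show "fst (gmap \<rho> H) \<subseteq> fst (A_graph l)"
      proof
        fix y assume "y \<in> fst (gmap \<rho> H)"
        then obtain x where x: "x \<in> fst H" "y = \<rho> x" unfolding gmap_def by auto
        then show "y \<in> fst (A_graph l)" using VH i unfolding vertsA \<rho>_def by (auto split: if_splits)
      qed
      show "snd (gmap \<rho> H) \<subseteq> snd (A_graph l)"
      proof
        fix e assume "e \<in> snd (gmap \<rho> H)"
        then obtain e0 where e0: "e0 \<in> snd H" "e = \<rho> ` e0" unfolding gmap_def by auto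
        then obtain x y where xy: "e0 = {x,y}" "x \<in> fst H" "y \<in> fst H" "x \<noteq> y" using is_graphD[OF gH] by blast
        have xyA: "{x,y} \<in> snd (A_graph l)" using EH e0 xy by auto
        have "{\<rho> x, \<rho> y} \<in> snd (A_graph l)"
        proof (cases "x = i")
          case True
          then have "y \<noteq> i" "y \<noteq> i+1" using xy i1H by auto
          have "{i+1, y} \<in> snd (A_graph l)"
            using adjA_D[OF xyA] True i \<open>y \<noteq> i+1\<close> by (intro adjA_I) linarith+
          then show ?thesis using True \<open>y \<noteq> i\<close> unfolding \<rho>_def by simp
        next
          case False
          show ?thesis
          proof (cases "y = i")
            case True
            then have xn: "x \<noteq> i" "x \<noteq> i+1" using xy i1H by auto
            have "{x, i+1} \<in> snd (A_graph l)"
              using adjA_D[OF xyA] True i xn by (intro adjA_I) linarith+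
            then show ?thesis using True xn unfolding \<rho>_def by simp
          next
            case False
            then show ?thesis using xyA \<open>x \<noteq> i\<close> unfolding \<rho>_def by simp
          qed
        qed
        then show "e \<in> snd (A_graph l)" using e0 xy by simp
      qed
    qed
    have iso2: "isomorphic F (gmap \<rho> H)" by (rule iso_gmap[OF iso F gH inj])
    have in1: "i+1 \<in> fst (gmap \<rho> H)" using iH unfolding gmap_def \<rho>_def by force
    have notin: "i \<notin> fst (gmap \<rho> H)" unfolding gmap_def \<rho>_def by auto
    have noedge: "{i+1, i+l} \<notin> snd (gmap \<rho> H)"
    proof
      assume "{i+1, i+l} \<in> snd (gmap \<rho> H)"
      then obtain e0 where e0: "e0 \<in> snd H" "{i+1, i+l} = \<rho> ` e0" unfolding gmap_def snd_conv image_iff by blast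
      obtain x y where xy: "e0 = {x,y}" "x \<in> fst H" "y \<in> fst H" "x \<noteq> y" using is_graphD[OF gH e0(1)] by blast
      have xyA: "{x,y} \<in> snd (A_graph l)" using EH e0 xy by auto
      have "{i+1, i+l} = {\<rho> x, \<rho> y}" using e0(2) xy(1) by simp
      then have c: "(\<rho> x = i+1 \<and> \<rho> y = i+l) \<or> (\<rho> x = i+l \<and> \<rho> y = i+1)" by (auto simp: doubleton_eq_iff)
      have r1: "\<rho> z = i+1 \<Longrightarrow> z \<in> fst H \<Longrightarrow> z = i" for z using i1H unfolding \<rho>_def by (auto split: if_splits)
      have r2: "\<rho> z = i+l \<Longrightarrow> z = i+l" for z using i unfolding \<rho>_def by (auto split: if_splits)
      have "{x,y} = {i, i+l}"
      proof (rule disjE[OF c])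
        assume "\<rho> x = i+1 \<and> \<rho> y = i+l"
        then have "x = i" "y = i+l" using r1[of x] r2[of y] xy(2) by blast+
        then show ?thesis by simp
      next
        assume "\<rho> x = i+l \<and> \<rho> y = i+1"
        then have "y = i" "x = i+l" using r1[of y] r2[of x] xy(3) by blast+
        then show ?thesis by (simp add: insert_commute)
      qed
      then have "{i, i+l} \<in> snd (A_graph l)" using xyA by simp
      then have "i + l \<le> i + (l - 1)" by (rule adjA_D)
      then show False using i by linarith
    qed
    show ?thesis using sub2 iso2 in1 notin noedge unfolding A_def E_def by auto
  qed
  have injphi: "inj_on (gmap \<rho>) (A i - A (i+1))"
  proof (rule inj_on_inverseI)
    fix H assume H: "H \<in> A i - A (i+1)"
    then have gH: "is_graph H" and i1H: "i+1 \<notin> fst H" unfolding A_def subgraph_def by auto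
    have "gmap \<rho>' (gmap \<rho> H) = gmap (\<rho>' \<circ> \<rho>) H" by (rule gmap_comp)
    also have "\<dots> = gmap id H" using i1H by (intro gmap_cong[OF gH]) (auto simp: \<rho>_def \<rho>'_def)
    also have "\<dots> = H" by (rule gmap_id)
    finally show "gmap \<rho>' (gmap \<rho> H) = H" .
  qed
  have disj: "gmap \<rho> ` (A i - A (i+1)) \<inter> E = {}" using phi by auto
  have un: "gmap \<rho> ` (A i - A (i+1)) \<union> E \<subseteq> A (i+1) - A i" using phi EA by auto
  have eqc: "card (gmap \<rho> ` (A i - A (i+1)) \<union> E) = card (A i - A (i+1)) + card E"
    using disj finE finA injphi by (simp add: card_Un_disjoint card_image)
  have lec: "card (gmap \<rho> ` (A i - A (i+1)) \<union> E) \<le> card (A (i+1) - A i)"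
    using un finA by (intro card_mono) auto
  have key: "card (A i - A (i+1)) + card E \<le> card (A (i+1) - A i)" using eqc lec by simp
  have c1: "card (A (i+1)) = card (A (i+1) \<inter> A i) + card (A (i+1) - A i)" using finA by (rule card_Int_Diff)
  have c2: "card (A i) = card (A i \<inter> A (i+1)) + card (A i - A (i+1))" using finA by (rule card_Int_Diff)
  have "A (i+1) \<inter> A i = A i \<inter> A (i+1)" by blast
  then have c1': "card (A (i+1)) = card (A i \<inter> A (i+1)) + card (A (i+1) - A i)" using c1 by simp
  have "card (A i) + card E \<le> card (A (i+1))" using key c1' c2 by linarith
  then have "int (card E) \<le> int (card (A (i+1))) - int (card (A i))" by linarith
  then show ?thesis unfolding F_degree_def A_def E_def by simp
qed



lemma fstruct:
  assumes F: "is_graph F" "connected_graph F" "diameter F = 2" and t: "t = min_degree F" "t < l"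
    and H: "subgraph H (F_graph l t)" "isomorphic F H" "2*l \<in> fst H"
  shows "\<And>j. j \<in> {1..t} \<Longrightarrow> j \<in> fst H \<and> {j, 2*l} \<in> snd H"
    and "fst H \<subseteq> insert (2*l) {1..t+(l-1)}"
proof -
  have gH: "is_graph H" and EH: "snd H \<subseteq> snd (F_graph l t)" using H(1) unfolding subgraph_def by auto
  have finH: "finite (fst H)" using gH unfolding is_graph_def by simp
  have nb: "y \<in> {1..t}" if "{y, 2*l} \<in> snd H" for y
  proof -
    have "{y, 2*l} \<in> snd (F_graph l t)" using EH that by blast
    then have "{y, 2*l} \<in> snd (A_graph l) \<or> (y = 2*l \<and> 2*l \<in> {1..t}) \<or> (2*l = 2*l \<and> y \<in> {1..t})"
      by (simp only: adjF)
    moreover have "{y, 2*l} \<notin> snd (A_graph l)"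
    proof
      assume "{y, 2*l} \<in> snd (A_graph l)"
      then have "2*l \<le> 2*l-1" by (rule adjA_D)
      then show False using t by linarith
    qed
    moreover have "2*l \<notin> {1..t}" using t by simp
    ultimately show ?thesis by blast
  qed
  define N where "N = {y\<in>fst H. {y, 2*l} \<in> snd H}"
  have Nsub: "N \<subseteq> {1..t}" unfolding N_def using nb by blast
  have "t \<le> card N" unfolding N_def using copy_props(2)[OF F gH H(2) H(3)] t by simp
  moreover have "card N \<le> t" using card_mono[OF _ Nsub] by simp
  ultimately have "card N = card {1..t}" by simp
  then have Neq: "N = {1..t}" using card_subset_eq[OF _ Nsub] by simp
  show "j \<in> fst H \<and> {j, 2*l} \<in> snd H" if "j \<in> {1..t}" for j using that Neq unfolding N_def by blast
  show "fst H \<subseteq> insert (2*l) {1..t+(l-1)}"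
  proof
    fix x assume x: "x \<in> fst H"
    show "x \<in> insert (2*l) {1..t+(l-1)}"
    proof (cases "x = 2*l \<or> x \<in> {1..t}")
      case True then show ?thesis by auto
    next
      case False
      then have x1: "x \<noteq> 2*l" "x \<notin> {1..t}" by auto
      have "{x, 2*l} \<notin> snd H" using nb x1 by blast
      then obtain w where w: "w \<in> fst H" "{x,w} \<in> snd H" "{w, 2*l} \<in> snd H"
        using copy_props(3)[OF F gH H(2) x H(3)] x1 by blast
      have wt: "w \<in> {1..t}" using nb w(3) by blast
      have "{x,w} \<in> snd (F_graph l t)" using EH w(2) by blast
      then have "{x,w} \<in> snd (A_graph l) \<or> (x = 2*l \<and> w \<in> {1..t}) \<or> (w = 2*l \<and> x \<in> {1..t})"
        by (simp only: adjF)
      moreover have "w \<noteq> 2*l" using wt t by auto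
      ultimately have "{x,w} \<in> snd (A_graph l)" using x1 by blast
      then have "1 \<le> x" "x \<le> w + (l-1)" using adjA_D by blast+
      then show ?thesis using wt by simp
    qed
  qed
qed

lemma f_upper:
  assumes F: "is_graph F" "connected_graph F" "diameter F = 2" and t: "t = min_degree F" "t < l"
    and n: "n = card (fst F)" "t + 1 \<le> n"
  shows "card {H. subgraph H (F_graph l t) \<and> isomorphic F H \<and> 2*l \<in> fst H} \<le> fact n * ((l-1) choose (n-t-1))"
proof -
  let ?S = "{H. subgraph H (F_graph l t) \<and> isomorphic F H \<and> 2*l \<in> fst H}"
  define V where "V = fst F"
  have finV: "finite V" using F(1) unfolding is_graph_def V_def by simp
  define Rs where "Rs = {R. R \<subseteq> {t+1..t+(l-1)} \<and> card R = n-t-1}"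
  define W where "W R = insert (2*l) ({1..t} \<union> R)" for R
  have cRs: "card Rs = (l-1) choose (n-t-1)" unfolding Rs_def using n_subsets[of "{t+1..t+(l-1)}" "n-t-1"] by simp
  have finRs: "finite Rs" unfolding Rs_def by simp
  have cW: "card (W R) = n" if "R \<in> Rs" for R
  proof -
    have R: "R \<subseteq> {t+1..t+(l-1)}" "card R = n-t-1" using that unfolding Rs_def by auto
    have finR: "finite R" using R(1) finite_subset by blast
    have d: "{1..t} \<inter> R = {}" using R(1) by auto
    have "2*l \<notin> {1..t} \<union> R" using R(1) t by auto
    then have "card (W R) = Suc (card ({1..t} \<union> R))" unfolding W_def using finR by simp
    also have "card ({1..t} \<union> R) = t + card R" using card_Un_disjoint[OF _ finR d] by simp
    finally show ?thesis using R(2) n by simp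
  qed
  define g where "g R = (SOME g. bij_betw g V (W R))" for R
  have gbij: "bij_betw (g R) V (W R)" if "R \<in> Rs" for R
  proof -
    have "finite (W R)" unfolding W_def using that unfolding Rs_def by (auto intro: finite_subset)
    moreover have "card V = card (W R)" using cW[OF that] n V_def by simp
    ultimately have "\<exists>g. bij_betw g V (W R)" using finite_same_card_bij[OF finV] by blast
    then show ?thesis unfolding g_def by (rule someI_ex)
  qed
  define C where "C R = (\<lambda>p. gmap (g R \<circ> p) F) ` {p. p permutes V}" for R
  have cC: "card (C R) \<le> fact n" for R
  proof -
    have "card (C R) \<le> card {p. p permutes V}" unfolding C_def using finite_permutations[OF finV] by (rule card_image_le)
    also have "\<dots> = fact n" using card_permutations[of V n] finV n V_def by simp
    finally show ?thesis .
  qed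
  have cover: "?S \<subseteq> (\<Union>R\<in>Rs. C R)"
  proof
    fix H assume "H \<in> ?S"
    then have H: "subgraph H (F_graph l t)" "isomorphic F H" "2*l \<in> fst H" by auto
    have gH: "is_graph H" using H(1) unfolding subgraph_def by simp
    note st = fstruct[OF F t H]
    define R where "R = fst H \<inter> {t+1..t+(l-1)}"
    have fH: "fst H = W R"
    proof
      show "fst H \<subseteq> W R"
      proof
        fix x assume "x \<in> fst H"
        then have "x \<in> insert (2*l) {1..t+(l-1)}" using st(2) by blast
        then show "x \<in> W R" unfolding W_def R_def using \<open>x \<in> fst H\<close> by auto
      qed
      show "W R \<subseteq> fst H" unfolding W_def R_def using st(1) H(3) by blast
    qed
    have cH: "card (fst H) = n" using copy_props(1)[OF F gH H(2)] n by simp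
    have RR: "R \<subseteq> {t+1..t+(l-1)}" unfolding R_def by blast
    have finR: "finite R" using RR finite_subset by blast
    have d: "{1..t} \<inter> R = {}" using RR by auto
    have "2*l \<notin> {1..t} \<union> R" using RR t by auto
    then have "card (W R) = Suc (card ({1..t} \<union> R))" unfolding W_def using finR by simp
    also have "card ({1..t} \<union> R) = t + card R" using card_Un_disjoint[OF _ finR d] by simp
    finally have "card R = n-t-1" using cH fH by simp
    then have RRs: "R \<in> Rs" unfolding Rs_def using RR by blast
    obtain f where f: "bij_betw f (fst F) (fst H)" "H = gmap f F" using iso_obtain[OF H(2) F(1) gH] by metis
    define p where "p x = (if x \<in> V then inv_into V (g R) (f x) else x)" for x
    have gb: "bij_betw (g R) V (W R)" using gbij[OF RRs] .
    have "bij_betw (inv_into V (g R) \<circ> f) V V"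
      using bij_betw_trans[OF f(1)[folded V_def, unfolded fH] bij_betw_inv_into[OF gb]] .
    then have "bij_betw p V V" by (rule bij_betw_cong[THEN iffD1, rotated]) (simp add: p_def)
    then have pp: "p permutes V" by (rule bij_imp_permutes) (simp add: p_def)
    have "gmap (g R \<circ> p) F = gmap f F"
    proof (rule gmap_cong[OF F(1)])
      fix x assume x: "x \<in> fst F"
      then have "f x \<in> W R" using f(1) fH by (auto simp: bij_betw_def)
      then have "f x \<in> g R ` V" using gb by (simp add: bij_betw_def)
      then show "(g R \<circ> p) x = f x" using x unfolding p_def V_def by (simp add: f_inv_into_f)
    qed
    then have "H = gmap (g R \<circ> p) F" using f(2) by simp
    then have "H \<in> C R" unfolding C_def using pp by (intro image_eqI[where x=p]) simp_all
    then show "H \<in> (\<Union>R\<in>Rs. C R)" using RRs by blast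
  qed
  have "card ?S \<le> card (\<Union>R\<in>Rs. C R)"
    using cover finRs unfolding C_def by (intro card_mono) (auto intro: finite_permutations[OF finV])
  also have "\<dots> \<le> (\<Sum>R\<in>Rs. card (C R))" using finRs by (rule card_UN_le)
  also have "\<dots> \<le> (\<Sum>R\<in>Rs. fact n)" using cC by (intro sum_mono) auto
  also have "\<dots> = fact n * card Rs" by simp
  finally show ?thesis using cRs by simp
qed



lemma f_pos:
  assumes F: "is_graph F" "connected_graph F" and t: "t = min_degree F"
    and n: "n = card (fst F)" "n < l"
  shows "0 < card {H. subgraph H (F_graph l t) \<and> isomorphic F H \<and> 2*l \<in> fst H}"
proof -
  define V where "V = fst F"
  have finV: "finite V" using F(1) unfolding is_graph_def V_def by simp
  have Vne: "V \<noteq> {}" using F(2) unfolding connected_graph_def V_def by simp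
  obtain w where w: "w \<in> V" "degree F w = t" using min_degree_ex[OF F(1)] Vne t V_def by auto
  define N where "N = {x\<in>V. {x,w} \<in> snd F}"
  have cN: "card N = t" using w(2) unfolding N_def degree_def V_def by simp
  have wN: "w \<notin> N" unfolding N_def using no_loop[OF F(1)] by simp
  have NV: "N \<subseteq> V - {w}" using wN unfolding N_def by blast
  have finN: "finite N" using NV finV finite_subset by blast
  have "card N \<le> card (V - {w})" using NV finV by (intro card_mono) auto
  then have tn: "t \<le> n - 1" using cN w(1) finV n V_def by simp
  define Rest where "Rest = V - insert w N"
  have finRest: "finite Rest" unfolding Rest_def using finV by simp
  have "card Rest = card V - card (insert w N)" unfolding Rest_def using finV NV w(1)
    by (intro card_Diff_subset) (auto intro: finite_subset)
  then have cRest: "card Rest = n - 1 - t" using cN wN finN n V_def by simp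
  have "\<exists>h. bij_betw h N {1..t}" using finite_same_card_bij[OF finN, of "{1..t}"] cN by simp
  then obtain h1 where h1: "bij_betw h1 N {1..t}" by blast
  have "card {t+1..n-1} = n - 1 - t" by simp
  then have "\<exists>h. bij_betw h Rest {t+1..n-1}" using finite_same_card_bij[OF finRest, of "{t+1..n-1}"] cRest by simp
  then obtain h2 where h2: "bij_betw h2 Rest {t+1..n-1}" by blast
  define g where "g x = (if x = w then 2*l else if x \<in> N then h1 x else h2 x)" for x
  have h1i: "h1 ` N = {1..t}" using h1 by (rule bij_betw_imp_surj_on)
  have h2i: "h2 ` Rest = {t+1..n-1}" using h2 by (rule bij_betw_imp_surj_on)
  have gN: "g x \<in> {1..t}" if x: "x \<in> N" for x
  proof -
    have "x \<noteq> w" using x wN by blast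
    then have "g x = h1 x" unfolding g_def using x by simp
    moreover have "h1 x \<in> h1 ` N" using x by (rule imageI)
    ultimately show ?thesis using h1i by simp
  qed
  have gR: "x \<in> Rest \<Longrightarrow> g x \<in> {t+1..n-1}" for x
  proof -
    assume x: "x \<in> Rest"
    then have "x \<noteq> w" "x \<notin> N" unfolding Rest_def by auto
    then have "g x = h2 x" unfolding g_def by simp
    moreover have "h2 x \<in> h2 ` Rest" using x by (rule imageI)
    ultimately show "g x \<in> {t+1..n-1}" using h2i by simp
  qed
  have img: "g ` V = insert (2*l) {1..n-1}"
  proof
    show "g ` V \<subseteq> insert (2*l) {1..n-1}"
    proof
      fix y assume "y \<in> g ` V"
      then obtain x where x: "x \<in> V" "y = g x" by blast
      consider "x = w" | "x \<in> N" | "x \<in> Rest" using x(1) unfolding Rest_def by blast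
      then show "y \<in> insert (2*l) {1..n-1}"
      proof cases
        case 1 then show ?thesis using x unfolding g_def by simp
      next
        case 2 then have "y \<in> {1..t}" using gN[OF 2] x by simp
          then show ?thesis using tn by simp
      next
        case 3 then have "y \<in> {t+1..n-1}" using gR[OF 3] x by simp
          then show ?thesis by simp
      qed
    qed
    show "insert (2*l) {1..n-1} \<subseteq> g ` V"
    proof
      fix y assume y: "y \<in> insert (2*l) {1..n-1}"
      show "y \<in> g ` V"
      proof (cases "y = 2*l")
        case True then show ?thesis using w(1) unfolding g_def by force
      next
        case False
        then have y1: "y \<in> {1..n-1}" using y by blast
        show ?thesis
        proof (cases "y \<le> t")
          case True
          then have "y \<in> h1 ` N" using h1i y1 by simp
          then obtain x where x: "x \<in> N" "y = h1 x" by blast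
          then have "g x = y" using wN unfolding g_def by auto
          then show ?thesis using x NV by blast
        next
          case False
          then have "y \<in> h2 ` Rest" using h2i y1 by simp
          then obtain x where x: "x \<in> Rest" "y = h2 x" by blast
          then have "g x = y" unfolding g_def Rest_def by auto
          then show ?thesis using x unfolding Rest_def by blast
        qed
      qed
    qed
  qed
  have n1: "1 \<le> n" using Vne finV n V_def by (simp add: Suc_le_eq card_gt_0_iff)
  have "card (insert (2*l) {1..n-1}) = n" using n n1 by simp
  then have inj: "inj_on g V" using img n finV V_def by (intro eq_card_imp_inj_on) auto
  define H where "H = gmap g F"
  have gH: "is_graph H" unfolding H_def using is_graph_gmap[OF F(1)] inj V_def by simp
  have sub: "subgraph H (F_graph l t)"
    unfolding subgraph_def
  proof (intro conjI gH)
    show "fst H \<subseteq> fst (F_graph l t)" unfolding H_def gmap_def vertsF using img n V_def by auto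
    show "snd H \<subseteq> snd (F_graph l t)"
    proof
      fix e assume "e \<in> snd H"
      then obtain e0 where e0: "e0 \<in> snd F" "e = g ` e0" unfolding H_def gmap_def snd_conv image_iff by blast
      obtain u v where uv: "u \<noteq> v" "e0 = {u,v}" "u \<in> V" "v \<in> V" using is_graphD[OF F(1) e0(1)] V_def by blast
      have ee: "e = {g u, g v}" using e0(2) uv(2) by simp
      have huv: "g u \<noteq> g v" using inj uv by (auto dest: inj_onD)
      have other: "g x \<in> {1..n-1}" if "x \<in> V" "x \<noteq> w" for x
      proof -
        have "g x \<in> insert (2*l) {1..n-1}" using img that(1) by blast
        moreover have "g x \<noteq> g w" using inj that w(1) by (auto dest: inj_onD)
        moreover have "g w = 2*l" unfolding g_def by simp
        ultimately show ?thesis by simp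
      qed
      show "e \<in> snd (F_graph l t)"
      proof (cases "u = w")
        case True
        then have "v \<in> N" unfolding N_def using uv e0(1) by (simp add: insert_commute)
        then have "g v \<in> {1..t}" by (rule gN)
        moreover have "g u = 2*l" using True unfolding g_def by simp
        ultimately show ?thesis unfolding ee adjF by blast
      next
        case False
        show ?thesis
        proof (cases "v = w")
          case True
          then have "u \<in> N" unfolding N_def using uv e0(1) by simp
          then have "g u \<in> {1..t}" by (rule gN)
          moreover have "g v = 2*l" using True unfolding g_def by simp
          ultimately show ?thesis unfolding ee adjF by blast
        next
          case False
          have a: "g u \<in> {1..n-1}" "g v \<in> {1..n-1}" using other uv \<open>u \<noteq> w\<close> False by blast+
          then have b: "1 \<le> g u" "g u \<le> n-1" "1 \<le> g v" "g v \<le> n-1" by simp_all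
          have "{g u, g v} \<in> snd (A_graph l)" using b huv n(2) by (intro adjA_I) linarith+
          then show ?thesis unfolding ee adjF by (rule disjI1)
        qed
      qed
    qed
  qed
  have iso: "isomorphic F H" unfolding H_def using iso_gmap_self[OF F(1)] inj V_def by simp
  have "2*l \<in> fst H" unfolding H_def gmap_def using img V_def by simp
  then have "H \<in> {H. subgraph H (F_graph l t) \<and> isomorphic F H \<and> 2*l \<in> fst H}" using sub iso by simp
  moreover have "finite {H. subgraph H (F_graph l t) \<and> isomorphic F H \<and> 2*l \<in> fst H}" using finite_subF by simp
  ultimately show ?thesis by (subst card_gt_0_iff) blast
qed



definition sig :: "nat \<Rightarrow> nat \<Rightarrow> nat" where
  "sig l x = (if x = 2*l then 2 else if x = 1 then l+1 else if x = l then l+2 else x+1)"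

lemma sig_2l: "sig l (2*l) = 2" unfolding sig_def by simp

lemma sig_1: "3 \<le> l \<Longrightarrow> sig l 1 = l+1" unfolding sig_def by simp

lemma sig_range: assumes "3 \<le> l" "x \<in> {1..l}" shows "3 \<le> sig l x" "sig l x \<le> l+2"
  using assms unfolding sig_def by auto

lemma sig_inj: assumes "3 \<le> l" shows "inj_on (sig l) (insert (2*l) {1..l})"
proof (rule inj_onI)
  fix x y assume x: "x \<in> insert (2*l) {1..l}" and y: "y \<in> insert (2*l) {1..l}" and e: "sig l x = sig l y"
  show "x = y"
  proof (cases "x = 2*l")
    case True
    then have "sig l y = 2" using e sig_2l by simp
    then show ?thesis using y True assms sig_range[of l y] by (cases "y = 2*l") auto
  next
    case False
    then have x1: "x \<in> {1..l}" using x by simp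
    show ?thesis
    proof (cases "y = 2*l")
      case True
      then have "sig l x = 2" using e sig_2l by simp
      then show ?thesis using x1 assms sig_range[of l x] by auto
    next
      case False
      then have y1: "y \<in> {1..l}" using y by simp
      show ?thesis using e x1 y1 assms unfolding sig_def by (auto split: if_splits)
    qed
  qed
qed

lemma sig_ne1: "x \<in> insert (2*l) {1..l} \<Longrightarrow> sig l x \<noteq> 1"
  unfolding sig_def by auto

lemma sig_eq2: "3 \<le> l \<Longrightarrow> x \<in> insert (2*l) {1..l} \<Longrightarrow> sig l x = 2 \<Longrightarrow> x = 2*l"
  unfolding sig_def by (auto split: if_splits)

lemma sig_eq3: "3 \<le> l \<Longrightarrow> x \<in> insert (2*l) {1..l} \<Longrightarrow> sig l x = 3 \<Longrightarrow> x = 2"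
  unfolding sig_def by (auto split: if_splits)



lemma t1_case:
  assumes F: "is_graph F" "connected_graph F" "diameter F = 2" and t: "min_degree F = 1"
    and n: "n = card (fst F)" "n < l"
  shows "card {H. subgraph H (F_graph l 1) \<and> isomorphic F H \<and> 2*l \<in> fst H}
       < card {H. subgraph H (A_graph l) \<and> isomorphic F H \<and> 1+1 \<in> fst H \<and> 1 \<notin> fst H \<and> {1+1, 1+l} \<in> snd H}"
    (is "card ?S < card ?E")
proof -
  define V where "V = fst F"
  have finV: "finite V" using F(1) unfolding is_graph_def V_def by simp
  obtain u w v where uwv: "u \<in> V" "v \<in> V" "w \<in> V" "u \<noteq> v" "{u,v} \<notin> snd F" "{u,w} \<in> snd F" "{w,v} \<in> snd F"
    using diam_pair[OF F] V_def by blast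
  have uw: "u \<noteq> w" using edge_in[OF F(1) uwv(6)] by simp
  have wv: "w \<noteq> v" using edge_in[OF F(1) uwv(7)] by simp
  have "card {u,v,w} = 3" using uw wv uwv(4) by simp
  moreover have "card {u,v,w} \<le> card V" using uwv finV by (intro card_mono) auto
  moreover have "card V = n" using n V_def by simp
  ultimately have n3: "3 \<le> n" by simp
  have l3: "3 \<le> l" "4 \<le> l" using n3 n by linarith+
  define U where "U = insert (2*l) {1..l}"
  have injU: "inj_on (sig l) U" unfolding U_def using sig_inj l3 by simp
  have finE: "finite ?E" using finite_subA[of l] by (rule finite_subset[rotated]) auto
  have finS: "finite ?S" using finite_subF[of l 1] by (rule finite_subset[rotated]) auto
  have psi: "gmap (sig l) H \<in> ?E" if H: "H \<in> ?S" for H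
  proof -
    have sub: "subgraph H (F_graph l 1)" and iso: "isomorphic F H" and lH: "2*l \<in> fst H" using H by auto
    have gH: "is_graph H" and EH: "snd H \<subseteq> snd (F_graph l 1)" using sub unfolding subgraph_def by auto
    note st = fstruct[OF F t[symmetric] _ sub iso lH]
    have VU: "fst H \<subseteq> U" using st(2) l3 unfolding U_def by simp
    have e1: "{1, 2*l} \<in> snd H" "1 \<in> fst H" using st(1)[of 1] l3 by auto
    have inj: "inj_on (sig l) (fst H)" using injU VU by (rule inj_on_subset)
    have sub2: "subgraph (gmap (sig l) H) (A_graph l)"
      unfolding subgraph_def
    proof (intro conjI)
      show "is_graph (gmap (sig l) H)" using is_graph_gmap[OF gH inj] .
      show "fst (gmap (sig l) H) \<subseteq> fst (A_graph l)"
      proof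
        fix y assume "y \<in> fst (gmap (sig l) H)"
        then obtain x where x: "x \<in> fst H" "y = sig l x" unfolding gmap_def fst_conv image_iff by blast
        show "y \<in> fst (A_graph l)"
        proof (cases "x = 2*l")
          case True then show ?thesis using x l3 sig_2l unfolding vertsA by simp
        next
          case False
          then have "x \<in> {1..l}" using x VU unfolding U_def by blast
          then have "3 \<le> sig l x" "sig l x \<le> l+2" using sig_range l3 by blast+
          then show ?thesis using x l3 unfolding vertsA by simp
        qed
      qed
      show "snd (gmap (sig l) H) \<subseteq> snd (A_graph l)"
      proof
        fix e assume "e \<in> snd (gmap (sig l) H)"
        then obtain e0 where e0: "e0 \<in> snd H" "e = sig l ` e0" unfolding gmap_def snd_conv image_iff by blast
        obtain x y where xy: "x \<noteq> y" "e0 = {x,y}" "x \<in> fst H" "y \<in> fst H" using is_graphD[OF gH e0(1)] by blast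
        have ee: "e = {sig l x, sig l y}" using e0(2) xy(2) by simp
        have xyF: "{x,y} \<in> snd (F_graph l 1)" using EH e0(1) xy(2) by blast
        have nA: "{z, 2*l} \<notin> snd (A_graph l)" for z
        proof
          assume "{z, 2*l} \<in> snd (A_graph l)"
          then have "2*l \<le> 2*l-1" by (rule adjA_D)
          then show False using l3 by linarith
        qed
        have hs: "sig l x \<noteq> sig l y" using inj xy by (auto dest: inj_onD)
        show "e \<in> snd (A_graph l)"
        proof (cases "x = 2*l")
          case True
          then have "{y, 2*l} \<in> snd (F_graph l 1)" using xyF by (simp add: insert_commute)
          then have "y = 1" unfolding adjF using nA l3 by auto
          then have "e = {2, l+1}" using ee True sig_2l sig_1 l3 by simp
          moreover have "{2, l+1} \<in> snd (A_graph l)" using l3 by (intro adjA_I) linarith+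
          ultimately show ?thesis by simp
        next
          case False
          show ?thesis
          proof (cases "y = 2*l")
            case True
            then have "{x, 2*l} \<in> snd (F_graph l 1)" using xyF by simp
            then have "x = 1" unfolding adjF using nA l3 by auto
            then have "e = {l+1, 2}" using ee True sig_2l sig_1 l3 by simp
            moreover have "{l+1, 2} \<in> snd (A_graph l)" using l3 by (intro adjA_I) linarith+
            ultimately show ?thesis by simp
          next
            case False
            have "x \<in> {1..l}" "y \<in> {1..l}" using xy VU \<open>x \<noteq> 2*l\<close> False unfolding U_def by blast+
            then have b: "3 \<le> sig l x" "sig l x \<le> l+2" "3 \<le> sig l y" "sig l y \<le> l+2" using sig_range l3 by blast+
            have "{sig l x, sig l y} \<in> snd (A_graph l)" using b hs l3 by (intro adjA_I) linarith+
            then show ?thesis using ee by simp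
          qed
        qed
      qed
    qed
    have iso2: "isomorphic F (gmap (sig l) H)" by (rule iso_gmap[OF iso F(1) gH inj])
    have in2: "2 \<in> fst (gmap (sig l) H)"
    proof -
      have "sig l (2*l) \<in> sig l ` fst H" using lH by (rule imageI)
      then show ?thesis unfolding gmap_def using sig_2l by simp
    qed
    have no1: "1 \<notin> fst (gmap (sig l) H)"
    proof
      assume "1 \<in> fst (gmap (sig l) H)"
      then obtain x where "x \<in> fst H" "1 = sig l x" unfolding gmap_def fst_conv image_iff by blast
      then show False using sig_ne1[of x l] VU unfolding U_def by auto
    qed
    have ed: "{2, l+1} \<in> snd (gmap (sig l) H)"
    proof -
      have "sig l ` {1, 2*l} \<in> (\<lambda>e. sig l ` e) ` snd H" using e1(1) by (rule imageI)
      moreover have "sig l ` {1, 2*l} = {2, l+1}" using sig_2l sig_1 l3 by (simp add: insert_commute)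
      ultimately show ?thesis unfolding gmap_def by simp
    qed
    show ?thesis using sub2 iso2 in2 no1 ed by (simp add: numeral_2_eq_2)
  qed
  have injpsi: "inj_on (gmap (sig l)) ?S"
  proof (rule inj_on_inverseI)
    fix H assume H: "H \<in> ?S"
    then have sub: "subgraph H (F_graph l 1)" and iso: "isomorphic F H" and lH: "2*l \<in> fst H" by auto
    have gH: "is_graph H" using sub unfolding subgraph_def by simp
    note st = fstruct[OF F t[symmetric] _ sub iso lH]
    have VU: "fst H \<subseteq> U" using st(2) l3 unfolding U_def by simp
    have "gmap (inv_into U (sig l)) (gmap (sig l) H) = gmap (inv_into U (sig l) \<circ> sig l) H" by (rule gmap_comp)
    also have "\<dots> = gmap id H"
    proof (rule gmap_cong[OF gH])
      fix x assume "x \<in> fst H"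
      then have "x \<in> U" using VU by blast
      then show "(inv_into U (sig l) \<circ> sig l) x = id x" using injU by simp
    qed
    also have "\<dots> = H" by (rule gmap_id)
    finally show "gmap (inv_into U (sig l)) (gmap (sig l) H) = H" .
  qed
  define R where "R = V - {u,v,w}"
  have finR: "finite R" unfolding R_def using finV by simp
  have "card R = n - 3" unfolding R_def using finV uwv uw wv n V_def \<open>card {u,v,w} = 3\<close>
    by (subst card_Diff_subset) auto
  moreover have "card {4..l} = l - 3" by simp
  ultimately have "card R \<le> card {4..l}" using n by simp
  then have "\<exists>f. f ` R \<subseteq> {4..l} \<and> inj_on f R" by (rule card_le_inj[OF finR finite_atLeastAtMost])
  then obtain h where h: "h ` R \<subseteq> {4..l}" "inj_on h R" by blast
  define g0 where "g0 x = (if x = w then 2 else if x = u then l+1 else if x = v then 3 else h x)" for x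
  have g0R: "x \<in> R \<Longrightarrow> g0 x = h x" for x unfolding g0_def R_def by auto
  have g0w: "g0 w = 2" "g0 u = l+1" "g0 v = 3" unfolding g0_def using uw wv uwv(4) by auto
  have hR: "x \<in> R \<Longrightarrow> h x \<in> {4..l}" for x using h(1) by blast
  have Vdec: "x \<in> V \<Longrightarrow> x = w \<or> x = u \<or> x = v \<or> x \<in> R" for x unfolding R_def by blast
  have inj0: "inj_on g0 V"
  proof (rule inj_onI)
    fix x y assume x: "x \<in> V" and y: "y \<in> V" and e: "g0 x = g0 y"
    show "x = y"
    proof (cases "x \<in> R \<and> y \<in> R")
      case True then show ?thesis using e g0R h(2) by (auto dest: inj_onD)
    next
      case False
      then show ?thesis using Vdec[OF x] Vdec[OF y] e g0w hR g0R l3 by (auto; fastforce)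
    qed
  qed
  have im0: "g0 ` V \<subseteq> {2..2+(l-1)}"
  proof
    fix y assume "y \<in> g0 ` V"
    then obtain x where x: "x \<in> V" "y = g0 x" by blast
    show "y \<in> {2..2+(l-1)}"
    proof (cases "x \<in> R")
      case True
      then have "h x \<in> {4..l}" by (rule hR)
      then have "4 \<le> y" "y \<le> l" using x(2) g0R[OF True] by simp_all
      then show ?thesis by simp
    next
      case False
      then have "x = w \<or> x = u \<or> x = v" using Vdec[OF x(1)] by blast
      then show ?thesis using x(2) g0w l3 by auto
    qed
  qed
  define H0 where "H0 = gmap g0 F"
  have sub0: "subgraph H0 (A_graph l)" unfolding H0_def
    using clique_sub[OF F(1) inj0[unfolded V_def] im0[unfolded V_def]] l3 by simp
  have iso0: "isomorphic F H0" unfolding H0_def using iso_gmap_self[OF F(1)] inj0 V_def by simp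
  have f0: "fst H0 = g0 ` V" unfolding H0_def gmap_def V_def by simp
  have in0: "2 \<in> fst H0" using f0 g0w uwv(3) by force
  have no0: "1 \<notin> fst H0" using f0 im0 by auto
  have edge0: "{g0 w, g0 u} \<in> snd H0" "{g0 w, g0 v} \<in> snd H0"
  proof -
    have "g0 ` {w,u} \<in> (\<lambda>e. g0 ` e) ` snd F" using uwv(6) by (intro imageI) (simp add: insert_commute)
    then show "{g0 w, g0 u} \<in> snd H0" unfolding H0_def gmap_def by simp
    have "g0 ` {w,v} \<in> (\<lambda>e. g0 ` e) ` snd F" using uwv(7) by (intro imageI)
    then show "{g0 w, g0 v} \<in> snd H0" unfolding H0_def gmap_def by simp
  qed
  have ed0: "{2, l+1} \<in> snd H0" using edge0(1) g0w by simp
  have e23: "{2, 3} \<in> snd H0" using edge0(2) g0w by simp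
  have H0E: "H0 \<in> ?E" using sub0 iso0 in0 no0 ed0 by (simp add: numeral_2_eq_2)
  have H0n: "H0 \<notin> gmap (sig l) ` ?S"
  proof
    assume "H0 \<in> gmap (sig l) ` ?S"
    then obtain H where H: "H \<in> ?S" "H0 = gmap (sig l) H" by blast
    then have sub: "subgraph H (F_graph l 1)" and iso: "isomorphic F H" and lH: "2*l \<in> fst H" by auto
    have gH: "is_graph H" and EH: "snd H \<subseteq> snd (F_graph l 1)" using sub unfolding subgraph_def by auto
    note st = fstruct[OF F t[symmetric] _ sub iso lH]
    have VU: "fst H \<subseteq> U" using st(2) l3 unfolding U_def by simp
    have "{2,3} \<in> snd (gmap (sig l) H)" using e23 H(2) by simp
    then obtain e0 where e0: "e0 \<in> snd H" "{2,3} = sig l ` e0" unfolding gmap_def snd_conv image_iff by blast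
    obtain a b where ab: "a \<noteq> b" "e0 = {a,b}" "a \<in> fst H" "b \<in> fst H" using is_graphD[OF gH e0(1)] by blast
    have "{2,3} = {sig l a, sig l b}" using e0(2) ab(2) by simp
    then have c: "(sig l a = 2 \<and> sig l b = 3) \<or> (sig l a = 3 \<and> sig l b = 2)" by (simp add: doubleton_eq_iff) blast
    have aU: "a \<in> insert (2*l) {1..l}" "b \<in> insert (2*l) {1..l}" using ab VU unfolding U_def by blast+
    have "{2*l, 2} \<in> snd H"
    proof (rule disjE[OF c])
      assume "sig l a = 2 \<and> sig l b = 3"
      then have "a = 2*l" "b = 2" using sig_eq2[OF l3(1) aU(1)] sig_eq3[OF l3(1) aU(2)] by blast+
      then show ?thesis using e0(1) ab(2) by simp
    next
      assume "sig l a = 3 \<and> sig l b = 2"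
      then have "b = 2*l" "a = 2" using sig_eq2[OF l3(1) aU(2)] sig_eq3[OF l3(1) aU(1)] by blast+
      then show ?thesis using e0(1) ab(2) by (simp add: insert_commute)
    qed
    then have "{2, 2*l} \<in> snd (F_graph l 1)" using EH by (auto simp: insert_commute)
    then have "{2, 2*l} \<in> snd (A_graph l) \<or> (2 = 2*l \<and> 2*l \<in> {1..1}) \<or> (2*l = 2*l \<and> (2::nat) \<in> {1..1})"
      by (simp only: adjF)
    moreover have "{2, 2*l} \<notin> snd (A_graph l)"
    proof
      assume "{2, 2*l} \<in> snd (A_graph l)"
      then have "2*l \<le> 2*l-1" by (rule adjA_D)
      then show False using l3 by linarith
    qed
    ultimately show False using l3 by auto
  qed
  have "gmap (sig l) ` ?S \<subseteq> ?E - {H0}" using psi H0n by blast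
  then have "card (gmap (sig l) ` ?S) \<le> card (?E - {H0})" using finE by (intro card_mono) auto
  moreover have "card (gmap (sig l) ` ?S) = card ?S" using injpsi by (rule card_image)
  moreover have "card (?E - {H0}) = card ?E - 1" using H0E finE by simp
  moreover have "card ?E > 0" using H0E finE by (subst card_gt_0_iff) blast
  ultimately show ?thesis by linarith
qed



theorem lemma9:
  fixes F :: "'b graph" and l :: nat
  assumes "is_graph F"
    and "connected_graph F" and "diameter F = 2"
    and "l > card (fst F)"
    and "min_degree F = 1 \<or>
         (min_degree F \<ge> 2 \<and>
          (l - 2) choose (card (fst F) - 2)
            > fact (card (fst F)) * ((l - 1) choose (card (fst F) - min_degree F - 1)))"
  shows "0 < F_degree F (F_graph l (min_degree F)) (2*l) \<and>
    (\<forall>i\<in>{1..min_degree F}.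
       int (F_degree F (F_graph l (min_degree F)) (2*l))
         < int (F_degree F (A_graph l) (i+1)) - int (F_degree F (A_graph l) i))"
proof -
  note F = assms(1-3)
  define t where "t = min_degree F"
  define n where "n = card (fst F)"
  have nl: "n < l" using assms(4) n_def by simp
  have finV: "finite (fst F)" using F(1) unfolding is_graph_def by simp
  obtain u w v where uwv: "u \<in> fst F" "v \<in> fst F" "w \<in> fst F" "u \<noteq> v" "{u,v} \<notin> snd F" "{u,w} \<in> snd F" "{w,v} \<in> snd F"
    using diam_pair[OF F] by blast
  have uw: "u \<noteq> w" using edge_in[OF F(1) uwv(6)] by simp
  have wv: "w \<noteq> v" using edge_in[OF F(1) uwv(7)] by simp
  have "card {u,v,w} = 3" using uw wv uwv(4) by simp
  moreover have "card {u,v,w} \<le> card (fst F)" using uwv finV by (intro card_mono) auto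
  ultimately have n3: "3 \<le> n" using n_def by simp
  obtain x where x: "x \<in> fst F" "degree F x = t" using min_degree_ex[OF F(1)] uwv(1) t_def by blast
  have "{y \<in> fst F. {y, x} \<in> snd F} \<subseteq> fst F - {x}" using no_loop[OF F(1), of x] by auto
  then have "degree F x \<le> card (fst F - {x})" unfolding degree_def using finV by (intro card_mono) auto
  then have tn: "t + 1 \<le> n" using x finV n_def n3 by simp
  have tl: "t < l" using tn nl by simp
  let ?S = "{H. subgraph H (F_graph l t) \<and> isomorphic F H \<and> 2*l \<in> fst H}"
  have fdeg: "F_degree F (F_graph l t) (2*l) = card ?S" unfolding F_degree_def by simp
  have pos: "0 < card ?S" by (rule f_pos[OF F(1,2) t_def n_def nl])
  have main: "int (card ?S) < int (F_degree F (A_graph l) (i+1)) - int (F_degree F (A_graph l) i)"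
    if i: "i \<in> {1..t}" for i
  proof -
    have i1: "1 \<le> i" "i + 1 \<le> l" "i + l \<le> 2*l-1" using i tl by auto
    have D: "int (card {H. subgraph H (A_graph l) \<and> isomorphic F H \<and> i+1 \<in> fst H \<and> i \<notin> fst H \<and> {i+1, i+l} \<in> snd H})
      \<le> int (F_degree F (A_graph l) (i+1)) - int (F_degree F (A_graph l) i)"
      by (rule diff_lower[OF F(1) i1(1,2)])
    have "card ?S < card {H. subgraph H (A_graph l) \<and> isomorphic F H \<and> i+1 \<in> fst H \<and> i \<notin> fst H \<and> {i+1, i+l} \<in> snd H}"
    proof (cases "t = 1")
      case True
      then have "i = 1" using i by simp
      then show ?thesis using t1_case[OF F _ n_def nl] True t_def by simp
    next
      case False
      then have hyp: "fact n * ((l - 1) choose (n - t - 1)) < (l - 2) choose (n - 2)"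
        using assms(5) t_def n_def by auto
      have "card ?S \<le> fact n * ((l-1) choose (n-t-1))" by (rule f_upper[OF F t_def tl n_def tn])
      also have "\<dots> < (l - 2) choose (n - 2)" by (rule hyp)
      also have "\<dots> \<le> card {H. subgraph H (A_graph l) \<and> isomorphic F H \<and> i+1 \<in> fst H \<and> i \<notin> fst H \<and> {i+1, i+l} \<in> snd H}"
        using Ei_lower[OF F(1) uwv(6) n_def[symmetric] _ i1(1,3)] n3 by simp
      finally show ?thesis .
    qed
    then show ?thesis using D by linarith
  qed
  show ?thesis using pos main fdeg unfolding t_def by simp
qed


end
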